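(* Let $\mu\in\mathbb{R}$, $\sigma>0$, and let $\frac12\le\alpha<\beta<1$, $0\le h_1\le h_2<1$. Put $k_1=\frac{h_2-h_1}{\beta-\alpha}$ and $k_2=\frac{h_1}{1-\beta}$. (i) If $k_1\ge k_2$, or if $k_1<k_2$ and $1-h_1\ge\frac{\beta-\alpha}{1-\alpha}$, then $$\sup_{X\in V_S(\mu,\sigma)}\rho_{\mathcal{K}^{h_1,h_2}_{\beta,\alpha}}[X]=\mu+\sigma\sqrt{\frac{1}{2(1-\alpha)}},$$ and the supremum is attained by the symmetric random variable $X_*$ taking the values $\mu-\sigma/\sqrt{2(1-\alpha)}$ and $\mu+\sigma/\sqrt{2(1-\alpha)}$ with probability $1-\alpha$ each and the value $\mu$ with probability $2\alpha-1$. (ii) If $k_1<k_2$ and $1-h_1<\frac{\beta-\alpha}{1-\alpha}$, then, with $\zeta=h_1^2(1-\alpha)+(1-2h_1)(1-\beta)$, $$\sup_{X\in V_S(\mu,\sigma)}\rho_{\mathcal{K}^{h_1,h_2}_{\beta,\alpha}}[X]=\mu+\sigma\sqrt{\frac{\zeta}{2(1-\beta)(\beta-\alpha)}},$$ and the supremum is attained by the symmetric random variable $X_*$ taking the values $\mu\pm\sigma h_1\sqrt{\frac{\beta-\alpha}{2(1-\beta)\zeta}}$ with probability $1-\beta$ each, the values $\mu\pm\sigma(1-h_1)\sqrt{\frac{1-\beta}{2(\beta-\alpha)\zeta}}$ with probability $\beta-\alpha$ each, and the value $\mu$ with probability $2\alpha-1$.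
   Context: All random variables are square-integrable on a common probability space. For a distortion function $h$ (nondecreasing on $[0,1]$ with $h(0)=0$, $h(1)=1$) the distortion risk measure of $X$ is the Choquet integral $\rho_h[X]=\int_0^\infty h(\bar F_X(x))\,dx+\int_{-\infty}^0\big(h(\bar F_X(x))-1\big)\,dx$, where $\bar F_X(x)=\mathbb{P}(X>x)$. For $0<\alpha<\beta<1$ and $0\le h_1\le h_2<1$, the GlueVaR distortion function is $\mathcal{K}^{h_1,h_2}_{\beta,\alpha}(p)=\frac{h_1p}{1-\beta}$ for $p\in[0,1-\beta)$, $\mathcal{K}^{h_1,h_2}_{\beta,\alpha}(p)=h_1+\frac{(h_2-h_1)(p-(1-\beta))}{\beta-\alpha}$ for $p\in[1-\beta,1-\alpha)$, and $\mathcal{K}^{h_1,h_2}_{\beta,\alpha}(p)=1$ for $p\in[1-\alpha,1]$. A random variable $X$ is symmetric if there is $m\in\mathbb{R}$ with $\mathbb{P}(X\le x)=\mathbb{P}(X\ge 2m-x)$ for all $x$. $V_S(\mu,\sigma)$ denotes the set of symmetric random variables $X$ with $\mathbb{E}X=\mu$ and $\mathrm{Var}(X)=\sigma^2$. *)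

theory Defs
  imports "HOL-Probability.Probability"
begin

definition survival :: "'a measure \<Rightarrow> ('a \<Rightarrow> real) \<Rightarrow> real \<Rightarrow> real" where
  "survival M X x = measure M {\<omega> \<in> space M. X \<omega> > x}"

definition distortion_rm :: "(real \<Rightarrow> real) \<Rightarrow> 'a measure \<Rightarrow> ('a \<Rightarrow> real) \<Rightarrow> real" where
  "distortion_rm h M X =
     (LBINT x:{0..}. h (survival M X x)) + (LBINT x:{..<0}. h (survival M X x) - 1)"

definition glue_K :: "real \<Rightarrow> real \<Rightarrow> real \<Rightarrow> real \<Rightarrow> real \<Rightarrow> real" where
  "glue_K h1 h2 \<beta> \<alpha> p =
     (if p < 1 - \<beta> then h1 * p / (1 - \<beta>)
      else if p < 1 - \<alpha> then h1 + (h2 - h1) * (p - (1 - \<beta>)) / (\<beta> - \<alpha>)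
      else 1)"

definition symmetric_rv :: "'a measure \<Rightarrow> ('a \<Rightarrow> real) \<Rightarrow> bool" where
  "symmetric_rv M X \<longleftrightarrow> (\<exists>m. \<forall>x. measure M {\<omega> \<in> space M. X \<omega> \<le> x}
                                  = measure M {\<omega> \<in> space M. X \<omega> \<ge> 2 * m - x})"

definition VS :: "'a measure \<Rightarrow> real \<Rightarrow> real \<Rightarrow> ('a \<Rightarrow> real) set" where
  "VS M \<mu> \<sigma> = {X. X \<in> borel_measurable M \<and> integrable M (\<lambda>\<omega>. (X \<omega>)\<^sup>2)
      \<and> symmetric_rv M X
      \<and> (\<integral>\<omega>. X \<omega> \<partial>M) = \<mu>
      \<and> (\<integral>\<omega>. (X \<omega> - \<mu>)\<^sup>2 \<partial>M) = \<sigma>\<^sup>2}"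

end

theory Submission
  imports Defs
begin


locale glue =
  fixes \<alpha> \<beta> h1 h2 :: real
  assumes a1: "1/2 \<le> \<alpha>" and a2: "\<alpha> < \<beta>" and a3: "\<beta> < 1"
    and a4: "0 \<le> h1" and a5: "h1 \<le> h2" and a6: "h2 < 1"
begin

abbreviation "h \<equiv> glue_K h1 h2 \<beta> \<alpha>"

lemma h_mono: assumes "p \<le> q" shows "h p \<le> h q"
proof -
  have b1: "h1 * p / (1-\<beta>) \<le> h1 * q / (1-\<beta>)" using assms a3 a4
    by (simp add: divide_right_mono mult_left_mono)
  have b2: "(h2 - h1) * (p - (1 - \<beta>)) / (\<beta> - \<alpha>) \<le> (h2 - h1) * (q - (1 - \<beta>)) / (\<beta> - \<alpha>)"
    using assms a2 a5 by (simp add: divide_right_mono mult_left_mono)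
  have b3: "p < 1-\<beta> \<Longrightarrow> h1 * p / (1-\<beta>) \<le> h1" using a3 a4
    by (simp add: mult_left_le pos_divide_le_eq mult_left_mono)
  have b4: "q \<ge> 1-\<beta> \<Longrightarrow> 0 \<le> (h2 - h1) * (q - (1 - \<beta>)) / (\<beta> - \<alpha>)" using a2 a5 by simp
  have b5: "p < 1-\<alpha> \<Longrightarrow> (h2 - h1) * (p - (1 - \<beta>)) / (\<beta> - \<alpha>) \<le> h2 - h1"
  proof -
    assume "p < 1-\<alpha>"
    then have "(h2 - h1) * (p - (1 - \<beta>)) \<le> (h2 - h1) * (\<beta> - \<alpha>)" using a5 by (intro mult_left_mono) auto
    then show ?thesis using a2 by (simp add: pos_divide_le_eq)
  qed
  have b6: "p < 1-\<beta> \<Longrightarrow> h1 * p / (1-\<beta>) \<le> 1" using b3 a5 a6 by fastforce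
  have b7: "p < 1-\<alpha> \<Longrightarrow> h1 + (h2 - h1) * (p - (1 - \<beta>)) / (\<beta> - \<alpha>) \<le> 1" using b5 a6 by fastforce
  show ?thesis unfolding glue_K_def using assms b1 b2 b3 b4 b6 b7 a6 a2 by auto
qed

lemma h_one: "p \<ge> 1 - \<alpha> \<Longrightarrow> h p = 1"
  using a2 by (simp add: glue_K_def)

lemma h_le1: "h p \<le> 1"
proof (cases "p \<ge> 1 - \<alpha>")
  case True then show ?thesis using h_one by simp
next
  case False then show ?thesis using h_mono[of p "1-\<alpha>"] h_one[of "1-\<alpha>"] by simp
qed

lemma h_zero: "h 0 = 0"
  using a3 by (simp add: glue_K_def)

lemma h_nonneg: "p \<ge> 0 \<Longrightarrow> h p \<ge> 0"
  using h_mono[of 0 p] h_zero by simp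

lemma h_majA:
  assumes "(h2 - h1) / (\<beta> - \<alpha>) \<ge> h1 / (1 - \<beta>) \<or> 1 - h1 \<ge> (\<beta> - \<alpha>) / (1 - \<alpha>)"
    and "p \<ge> 0"
  shows "h p \<le> p / (1 - \<alpha>)"
proof -
  have pa: "1 - \<alpha> > 0" "\<beta> - \<alpha> > 0" "1 - \<beta> > 0" using a2 a3 by auto
  have key: "h1 \<le> (1-\<beta>)/(1-\<alpha>)"
  proof (cases "1 - h1 \<ge> (\<beta> - \<alpha>) / (1 - \<alpha>)")
    case True
    have "(1-\<beta>)/(1-\<alpha>) = 1 - (\<beta> - \<alpha>) / (1 - \<alpha>)" using pa by (simp add: field_simps)
    then show ?thesis using True by simp
  next
    case False
    then have c: "(h2 - h1) / (\<beta> - \<alpha>) \<ge> h1 / (1 - \<beta>)" using assms(1) by auto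
    then have "h1 * (\<beta> - \<alpha>) \<le> (h2 - h1) * (1-\<beta>)" using pa by (simp add: field_simps)
    also have "\<dots> \<le> (1 - h1) * (1-\<beta>)" using a6 pa by (intro mult_right_mono) auto
    finally have "h1 * (1 - \<alpha>) \<le> 1 - \<beta>" by (simp add: algebra_simps)
    then show ?thesis using pa by (simp add: field_simps)
  qed
  show ?thesis
  proof (cases "p < 1 - \<beta>")
    case True
    have "h p = h1 * p / (1-\<beta>)" using True by (simp add: glue_K_def)
    also have "\<dots> \<le> ((1-\<beta>)/(1-\<alpha>)) * p / (1-\<beta>)" using key assms(2) pa
      by (intro divide_right_mono mult_right_mono) auto
    also have "\<dots> = p / (1-\<alpha>)" using pa by simp
    finally show ?thesis .
  next
    case F1: False
    show ?thesis
    proof (cases "p < 1 - \<alpha>")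
      case True
      have hp: "h p = h1 + (h2 - h1) * (p - (1 - \<beta>)) / (\<beta> - \<alpha>)" using True F1 by (simp add: glue_K_def)
      define t where "t = (p - (1-\<beta>)) / (\<beta> - \<alpha>)"
      have t01: "0 \<le> t" "t \<le> 1" using True F1 pa by (auto simp: t_def field_simps)
      have pt: "p = (1-\<beta>) + t * (\<beta> - \<alpha>)" using pa by (simp add: t_def)
      have "(h2 - h1) * (p - (1 - \<beta>)) / (\<beta> - \<alpha>) = (h2 - h1) * t" by (simp add: t_def)
      then have "h p = h1 + (h2 - h1) * t" using hp by simp
      then have "h p = h1 * (1 - t) + h2 * t" by (simp add: algebra_simps)
      also have "\<dots> \<le> ((1-\<beta>)/(1-\<alpha>)) * (1 - t) + 1 * t"
        using key t01 a6 by (intro add_mono mult_right_mono) auto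
      also have "\<dots> = p / (1-\<alpha>)" using pa unfolding pt by (simp add: field_simps)
      finally show ?thesis .
    next
      case False
      then show ?thesis using h_one pa by (simp add: field_simps)
    qed
  qed
qed

end

context prob_space begin

lemma LC:
  assumes X: "X \<in> borel_measurable M"
  shows "(\<integral>\<^sup>+x. ennreal (indicator {c..} x * measure M {\<omega> \<in> space M. X \<omega> > x}) \<partial>lborel)
       = (\<integral>\<^sup>+\<omega>. ennreal (max 0 (X \<omega> - c)) \<partial>M)"
proof -
  interpret P: pair_sigma_finite lborel M ..
  define f where "f x \<omega> = (indicator {c..<X \<omega>} x :: ennreal)" for x \<omega>
  have fm: "case_prod f \<in> borel_measurable (lborel \<Otimes>\<^sub>M M)"
  proof -
    have "case_prod f = (\<lambda>p. indicator {p. c \<le> fst p \<and> fst p < X (snd p)} p)"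
      by (auto simp: f_def fun_eq_iff split: split_indicator)
    also have "\<dots> \<in> borel_measurable (lborel \<Otimes>\<^sub>M M)"
      using X by measurable
    finally show ?thesis .
  qed
  have inner1: "(\<integral>\<^sup>+\<omega>. f x \<omega> \<partial>M) = ennreal (indicator {c..} x * measure M {\<omega> \<in> space M. X \<omega> > x})" for x
  proof -
    have "(\<integral>\<^sup>+\<omega>. f x \<omega> \<partial>M) = (\<integral>\<^sup>+\<omega>. indicator {\<omega> \<in> space M. c \<le> x \<and> x < X \<omega>} \<omega> \<partial>M)"
      by (intro nn_integral_cong) (auto simp: f_def split: split_indicator)
    also have "\<dots> = emeasure M {\<omega> \<in> space M. c \<le> x \<and> x < X \<omega>}"
      using X by (intro nn_integral_indicator) measurable
    also have "\<dots> = ennreal (indicator {c..} x * measure M {\<omega> \<in> space M. X \<omega> > x})"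
      by (cases "c \<le> x") (auto simp: emeasure_eq_measure)
    finally show ?thesis .
  qed
  have inner2: "(\<integral>\<^sup>+x. f x \<omega> \<partial>lborel) = ennreal (max 0 (X \<omega> - c))" for \<omega>
    by (cases "c \<le> X \<omega>") (auto simp: f_def max_def)
  have "(\<integral>\<^sup>+x. ennreal (indicator {c..} x * measure M {\<omega> \<in> space M. X \<omega> > x}) \<partial>lborel)
      = (\<integral>\<^sup>+x. (\<integral>\<^sup>+\<omega>. f x \<omega> \<partial>M) \<partial>lborel)" by (simp add: inner1)
  also have "\<dots> = (\<integral>\<^sup>+\<omega>. (\<integral>\<^sup>+x. f x \<omega> \<partial>lborel) \<partial>M)"
    using P.Fubini'[OF fm] by simp
  also have "\<dots> = (\<integral>\<^sup>+\<omega>. ennreal (max 0 (X \<omega> - c)) \<partial>M)" by (simp add: inner2)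
  finally show ?thesis .
qed

lemma sym_facts:
  assumes XV: "X \<in> VS M \<mu> \<sigma>"
  shows "integrable M X"
    and "\<And>x. prob {\<omega> \<in> space M. X \<omega> \<le> x} = prob {\<omega> \<in> space M. X \<omega> \<ge> 2 * \<mu> - x}"
    and "integrable M (\<lambda>\<omega>. (max 0 (X \<omega> - \<mu>))\<^sup>2)"
    and "(\<integral>\<omega>. (max 0 (X \<omega> - \<mu>))\<^sup>2 \<partial>M) = \<sigma>\<^sup>2 / 2"
proof -
  have Xm: "X \<in> borel_measurable M" and X2: "integrable M (\<lambda>\<omega>. (X \<omega>)\<^sup>2)"
    and sy: "symmetric_rv M X" and EX: "(\<integral>\<omega>. X \<omega> \<partial>M) = \<mu>"
    and VX: "(\<integral>\<omega>. (X \<omega> - \<mu>)\<^sup>2 \<partial>M) = \<sigma>\<^sup>2"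
    using XV by (auto simp: VS_def)
  show XI: "integrable M X"
  proof (rule Bochner_Integration.integrable_bound[where f="\<lambda>\<omega>. 1 + (X \<omega>)\<^sup>2"])
    show "integrable M (\<lambda>\<omega>. 1 + (X \<omega>)\<^sup>2)" using X2 by simp
    show "X \<in> borel_measurable M" by fact
    have "\<bar>x\<bar> \<le> \<bar>1 + x\<^sup>2\<bar>" for x :: real
    proof (cases "\<bar>x\<bar> \<le> 1")
      case True
      have "0 \<le> x\<^sup>2" by simp
      then show ?thesis using True by linarith
    next
      case False
      then have "\<bar>x\<bar> * 1 \<le> \<bar>x\<bar> * \<bar>x\<bar>" by (intro mult_left_mono) auto
      then show ?thesis by (simp add: power2_eq_square abs_mult)
    qed
    then show "AE \<omega> in M. norm (X \<omega>) \<le> norm (1 + (X \<omega>)\<^sup>2)" by auto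
  qed
  obtain m where hm: "\<And>x. prob {\<omega> \<in> space M. X \<omega> \<le> x} = prob {\<omega> \<in> space M. X \<omega> \<ge> 2 * m - x}"
    using sy unfolding symmetric_rv_def by blast
  define N1 where "N1 = distr M borel X"
  define N2 where "N2 = distr M borel (\<lambda>\<omega>. 2 * m - X \<omega>)"
  have Xm2: "(\<lambda>\<omega>. 2 * m - X \<omega>) \<in> borel_measurable M" using Xm by measurable
  have cdfeq: "cdf N1 = cdf N2"
  proof
    fix x
    have "cdf N1 x = prob {\<omega> \<in> space M. X \<omega> \<le> x}"
      unfolding cdf_def N1_def using Xm
      by (subst measure_distr) (auto intro!: arg_cong[where f=prob])
    also have "\<dots> = prob {\<omega> \<in> space M. X \<omega> \<ge> 2 * m - x}" by (rule hm)
    also have "\<dots> = cdf N2 x"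
      unfolding cdf_def N2_def using Xm2
      by (subst measure_distr) (auto intro!: arg_cong[where f=prob])
    finally show "cdf N1 x = cdf N2 x" .
  qed
  have N12: "N1 = N2"
  proof (rule cdf_unique)
    show "cdf N1 = cdf N2" by (rule cdfeq)
    show "real_distribution N1" unfolding N1_def using Xm by (rule real_distribution_distr)
    show "real_distribution N2" unfolding N2_def using Xm2 by (rule real_distribution_distr)
  qed
  have transfer: "(\<integral>\<omega>. g (X \<omega>) \<partial>M) = (\<integral>\<omega>. g (2 * m - X \<omega>) \<partial>M)"
    if g: "g \<in> borel_measurable borel" for g :: "real \<Rightarrow> real"
  proof -
    have "(\<integral>\<omega>. g (X \<omega>) \<partial>M) = integral\<^sup>L N1 g" unfolding N1_def using Xm g by (simp add: integral_distr)
    also have "\<dots> = integral\<^sup>L N2 g" by (simp add: N12)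
    also have "\<dots> = (\<integral>\<omega>. g (2 * m - X \<omega>) \<partial>M)" unfolding N2_def using Xm2 g by (simp add: integral_distr)
    finally show ?thesis .
  qed
  have "\<mu> = (\<integral>\<omega>. 2 * m - X \<omega> \<partial>M)" using transfer[of "\<lambda>x. x"] EX by simp
  also have "\<dots> = 2 * m - \<mu>" using XI EX by (simp add: prob_space)
  finally have m\<mu>: "m = \<mu>" by simp
  show "prob {\<omega> \<in> space M. X \<omega> \<le> x} = prob {\<omega> \<in> space M. X \<omega> \<ge> 2 * \<mu> - x}" for x
    using hm m\<mu> by simp
  have XmI: "integrable M (\<lambda>\<omega>. (X \<omega> - \<mu>)\<^sup>2)"
  proof -
    have "(\<lambda>\<omega>. (X \<omega> - \<mu>)\<^sup>2) = (\<lambda>\<omega>. (X \<omega>)\<^sup>2 - 2 * \<mu> * X \<omega> + \<mu>\<^sup>2)"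
      by (simp add: fun_eq_iff power2_eq_square algebra_simps)
    then show ?thesis using X2 XI by simp
  qed
  have bnd: "integrable M (\<lambda>\<omega>. (max 0 (f \<omega>))\<^sup>2)" if "integrable M (\<lambda>\<omega>. (f \<omega>)\<^sup>2)" "f \<in> borel_measurable M" for f :: "'a \<Rightarrow> real"
  proof (rule Bochner_Integration.integrable_bound[OF that(1)])
    show "(\<lambda>\<omega>. (max 0 (f \<omega>))\<^sup>2) \<in> borel_measurable M" using that(2) by measurable
    have "norm ((max 0 y)\<^sup>2) \<le> norm (y\<^sup>2)" for y :: real
      by (cases "y \<le> 0") (simp_all add: max_def)
    then show "AE \<omega> in M. norm ((max 0 (f \<omega>))\<^sup>2) \<le> norm ((f \<omega>)\<^sup>2)" by simp
  qed
  have fm1: "(\<lambda>\<omega>. X \<omega> - \<mu>) \<in> borel_measurable M" "(\<lambda>\<omega>. \<mu> - X \<omega>) \<in> borel_measurable M" using Xm by auto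
  have I1: "integrable M (\<lambda>\<omega>. (max 0 (X \<omega> - \<mu>))\<^sup>2)" using bnd[OF XmI fm1(1)] .
  have XmI': "integrable M (\<lambda>\<omega>. (\<mu> - X \<omega>)\<^sup>2)" 
  proof -
    have "(\<lambda>\<omega>. (\<mu> - X \<omega>)\<^sup>2) = (\<lambda>\<omega>. (X \<omega> - \<mu>)\<^sup>2)"
      by (simp add: fun_eq_iff power2_eq_square algebra_simps)
    then show ?thesis using XmI by simp
  qed
  have I2: "integrable M (\<lambda>\<omega>. (max 0 (\<mu> - X \<omega>))\<^sup>2)" using bnd[OF XmI' fm1(2)] .
  show "integrable M (\<lambda>\<omega>. (max 0 (X \<omega> - \<mu>))\<^sup>2)" by (rule I1)
  have eq: "(\<integral>\<omega>. (max 0 (X \<omega> - \<mu>))\<^sup>2 \<partial>M) = (\<integral>\<omega>. (max 0 (\<mu> - X \<omega>))\<^sup>2 \<partial>M)"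
    using transfer[of "\<lambda>x. (max 0 (x - \<mu>))\<^sup>2"] m\<mu> by simp
  have "(\<lambda>\<omega>. (X \<omega> - \<mu>)\<^sup>2) = (\<lambda>\<omega>. (max 0 (X \<omega> - \<mu>))\<^sup>2 + (max 0 (\<mu> - X \<omega>))\<^sup>2)"
  proof
    fix \<omega>
    show "(X \<omega> - \<mu>)\<^sup>2 = (max 0 (X \<omega> - \<mu>))\<^sup>2 + (max 0 (\<mu> - X \<omega>))\<^sup>2"
      by (cases "X \<omega> \<le> \<mu>") (simp_all add: max_def power2_eq_square algebra_simps)
  qed
  then have "\<sigma>\<^sup>2 = (\<integral>\<omega>. (max 0 (X \<omega> - \<mu>))\<^sup>2 \<partial>M) + (\<integral>\<omega>. (max 0 (\<mu> - X \<omega>))\<^sup>2 \<partial>M)"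
    using VX I1 I2 by simp
  then show "(\<integral>\<omega>. (max 0 (X \<omega> - \<mu>))\<^sup>2 \<partial>M) = \<sigma>\<^sup>2 / 2" using eq by simp
qed

lemma finIco: "emeasure lborel {a..<b::real} < \<top>"
  by (cases "a \<le> b") auto

lemma surv_antimono:
  assumes X: "X \<in> borel_measurable M" and "x \<le> y"
  shows "survival M X y \<le> survival M X x"
  unfolding survival_def using assms
  by (intro finite_measure_mono) (auto, measurable)

lemma surv_nonneg: "0 \<le> survival M X x"
  unfolding survival_def by simp

lemma surv_le1: "survival M X x \<le> 1"
  unfolding survival_def by simp

lemma G_one:
  assumes gl: "glue \<alpha> \<beta> h1 h2" and XV: "X \<in> VS M \<mu> \<sigma>" and x: "x < \<mu>"
  shows "glue_K h1 h2 \<beta> \<alpha> (survival M X x) = 1"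
proof -
  interpret glue \<alpha> \<beta> h1 h2 by (rule gl)
  have Xm: "X \<in> borel_measurable M" using XV by (simp add: VS_def)
  have eq: "prob {\<omega> \<in> space M. X \<omega> \<le> \<mu>} = prob {\<omega> \<in> space M. X \<omega> \<ge> \<mu>}"
    using sym_facts(2)[OF XV, of \<mu>] by simp
  have "1 = prob ({\<omega> \<in> space M. X \<omega> \<le> \<mu>} \<union> {\<omega> \<in> space M. X \<omega> \<ge> \<mu>})"
  proof -
    have "{\<omega> \<in> space M. X \<omega> \<le> \<mu>} \<union> {\<omega> \<in> space M. X \<omega> \<ge> \<mu>} = space M" by auto
    then show ?thesis by (simp add: prob_space)
  qed
  also have "\<dots> \<le> prob {\<omega> \<in> space M. X \<omega> \<le> \<mu>} + prob {\<omega> \<in> space M. X \<omega> \<ge> \<mu>}"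
  proof -
    have e1: "{\<omega> \<in> space M. X \<omega> \<le> \<mu>} \<in> events" using Xm by measurable
    have e2: "{\<omega> \<in> space M. X \<omega> \<ge> \<mu>} \<in> events" using Xm by measurable
    show ?thesis using e1 e2 by (rule measure_Un_le)
  qed
  finally have half: "1/2 \<le> prob {\<omega> \<in> space M. X \<omega> \<ge> \<mu>}" using eq by simp
  have "prob {\<omega> \<in> space M. X \<omega> \<ge> \<mu>} \<le> survival M X x"
    unfolding survival_def using Xm x by (intro finite_measure_mono) (auto, measurable)
  then have "survival M X x \<ge> 1 - \<alpha>" using half a1 by linarith
  then show ?thesis by (rule h_one)
qed

lemma G_meas:
  assumes gl: "glue \<alpha> \<beta> h1 h2" and Xm: "X \<in> borel_measurable M"
  shows "(\<lambda>x. glue_K h1 h2 \<beta> \<alpha> (survival M X x)) \<in> borel_measurable borel"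
    and "(\<lambda>x. survival M X x) \<in> borel_measurable borel"
proof -
  interpret glue \<alpha> \<beta> h1 h2 by (rule gl)
  have "mono (\<lambda>x. - glue_K h1 h2 \<beta> \<alpha> (survival M X x))"
    by (auto simp: mono_def intro!: h_mono surv_antimono[OF Xm])
  then have "(\<lambda>x. - (- glue_K h1 h2 \<beta> \<alpha> (survival M X x))) \<in> borel_measurable borel"
    by (intro borel_measurable_uminus borel_measurable_mono)
  then show "(\<lambda>x. glue_K h1 h2 \<beta> \<alpha> (survival M X x)) \<in> borel_measurable borel" by simp
  have "mono (\<lambda>x. - survival M X x)"
    by (auto simp: mono_def intro!: surv_antimono[OF Xm])
  then have "(\<lambda>x. - (- survival M X x)) \<in> borel_measurable borel"
    by (intro borel_measurable_uminus borel_measurable_mono)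
  then show "(\<lambda>x. survival M X x) \<in> borel_measurable borel" by simp
qed

lemma rep:
  assumes gl: "glue \<alpha> \<beta> h1 h2" and XV: "X \<in> VS M \<mu> \<sigma>"
    and gi: "integrable lborel (\<lambda>x. indicator {\<mu>..} x * glue_K h1 h2 \<beta> \<alpha> (survival M X x))"
  shows "distortion_rm (glue_K h1 h2 \<beta> \<alpha>) M X
       = \<mu> + (\<integral>x. indicator {\<mu>..} x * glue_K h1 h2 \<beta> \<alpha> (survival M X x) \<partial>lborel)"
proof -
  define G where "G x = glue_K h1 h2 \<beta> \<alpha> (survival M X x)" for x
  define g where "g x = indicator {\<mu>..} x * G x" for x
  define d where "d x = (indicator {0..<\<mu>} x - indicator {\<mu>..<0} x :: real)" for x
  have G1: "x < \<mu> \<Longrightarrow> G x = 1" for x unfolding G_def by (rule G_one[OF gl XV])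
  have gi': "integrable lborel g" using gi unfolding g_def[abs_def] G_def[abs_def] .
  have di: "integrable lborel d" unfolding d_def
    by (intro Bochner_Integration.integrable_diff integrable_real_indicator) (auto simp: finIco)
  have dint: "(\<integral>x. d x \<partial>lborel) = \<mu>"
  proof (cases "0 \<le> \<mu>")
    case True
    then have "{\<mu>..<0::real} = {}" by auto
    then show ?thesis unfolding d_def using True
      by (subst Bochner_Integration.integral_diff) (auto intro!: integrable_real_indicator)
  next
    case False
    then have "{0..<\<mu>::real} = {}" by auto
    then show ?thesis unfolding d_def using False
      by (subst Bochner_Integration.integral_diff) (auto intro!: integrable_real_indicator)
  qed
  have gd: "integrable lborel (\<lambda>x. g x + d x)" using gi' di by simp
  have p1: "indicator {0..} x *\<^sub>R G x = indicator {0..} x *\<^sub>R (g x + d x)" for x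
    by (cases "x < \<mu>"; cases "x < 0") (auto simp: g_def d_def G1 indicator_def)
  have p2: "indicator {..<0} x *\<^sub>R (G x - 1) = indicator {..<0} x *\<^sub>R (g x + d x)" for x
    by (cases "x < \<mu>"; cases "x < 0") (auto simp: g_def d_def G1 indicator_def)
  have p3: "indicator {0..} x *\<^sub>R (g x + d x) + indicator {..<0} x *\<^sub>R (g x + d x) = g x + d x" for x :: real
    by (auto simp: indicator_def)
  have "distortion_rm (glue_K h1 h2 \<beta> \<alpha>) M X
      = (\<integral>x. indicator {0..} x *\<^sub>R (g x + d x) \<partial>lborel) + (\<integral>x. indicator {..<0} x *\<^sub>R (g x + d x) \<partial>lborel)"
    unfolding distortion_rm_def set_lebesgue_integral_def G_def[symmetric] p1 p2 ..
  also have "\<dots> = (\<integral>x. indicator {0..} x *\<^sub>R (g x + d x) + indicator {..<0} x *\<^sub>R (g x + d x) \<partial>lborel)"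
    by (intro Bochner_Integration.integral_add[symmetric] integrable_mult_indicator gd) auto
  also have "\<dots> = (\<integral>x. g x + d x \<partial>lborel)" unfolding p3 ..
  also have "\<dots> = (\<integral>x. g x \<partial>lborel) + \<mu>" using gi' di dint by simp
  finally show ?thesis by (simp add: g_def G_def)
qed


lemma upper:
  assumes gl: "glue \<alpha> \<beta> h1 h2" and XV: "X \<in> VS M \<mu> \<sigma>"
    and c1: "0 \<le> c1" and c12: "c1 \<le> c2" and a: "0 \<le> a" and s: "0 \<le> s" and sk: "s \<le> k"
    and lam: "0 \<le> lam"
    and hA: "c1 < c2 \<Longrightarrow> \<forall>t. 0 \<le> t \<longrightarrow> t \<le> 1 \<longrightarrow> glue_K h1 h2 \<beta> \<alpha> t \<le> a + s * t"
    and hK: "\<forall>t. 0 \<le> t \<longrightarrow> t \<le> 1 \<longrightarrow> glue_K h1 h2 \<beta> \<alpha> t \<le> k * t"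
    and hQ: "\<forall>z\<ge>0. s * max 0 (z - c1) + (k - s) * max 0 (z - c2) \<le> lam * z\<^sup>2"
  shows "integrable lborel (\<lambda>x. indicator {\<mu>..} x * glue_K h1 h2 \<beta> \<alpha> (survival M X x))"
    and "(\<integral>x. indicator {\<mu>..} x * glue_K h1 h2 \<beta> \<alpha> (survival M X x) \<partial>lborel)
          \<le> c1 + a * (c2 - c1) + lam * \<sigma>\<^sup>2 / 2"
proof -
  interpret glue \<alpha> \<beta> h1 h2 by (rule gl)
  have Xm: "X \<in> borel_measurable M" using XV by (simp add: VS_def)
  define S where "S x = survival M X x" for x
  define g where "g x = indicator {\<mu>..} x * glue_K h1 h2 \<beta> \<alpha> (S x)" for x
  have Sm[measurable]: "S \<in> borel_measurable borel" unfolding S_def[abs_def] by (rule G_meas(2)[OF gl Xm])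
  have Gm[measurable]: "(\<lambda>x. glue_K h1 h2 \<beta> \<alpha> (S x)) \<in> borel_measurable borel"
    unfolding S_def by (rule G_meas(1)[OF gl Xm])
  have gm[measurable]: "g \<in> borel_measurable borel" unfolding g_def[abs_def] by measurable
  have S01: "0 \<le> S x" "S x \<le> 1" for x unfolding S_def by (rule surv_nonneg, rule surv_le1)
  have g0: "0 \<le> g x" for x unfolding g_def using S01 by (simp add: h_nonneg)
  define B where "B = c1 + a * (c2 - c1) + lam * \<sigma>\<^sup>2 / 2"
  define t1 where "t1 x = (indicator {\<mu>..<\<mu>+c1} x :: real)" for x
  define t2 where "t2 x = a * (indicator {\<mu>+c1..<\<mu>+c2} x :: real)" for x
  define t3 where "t3 x = s * (indicator {\<mu>+c1..} x * S x)" for x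
  define t4 where "t4 x = (k - s) * (indicator {\<mu>+c2..} x * S x)" for x
  have t0: "0 \<le> t1 x" "0 \<le> t2 x" "0 \<le> t3 x" "0 \<le> t4 x" for x
    unfolding t1_def t2_def t3_def t4_def using a s sk S01 by auto
  have gle: "g x \<le> t1 x + t2 x + t3 x + t4 x" for x
  proof -
    consider "x < \<mu>" | "\<mu> \<le> x" "x < \<mu> + c1" | "\<mu> + c1 \<le> x" "x < \<mu> + c2" | "\<mu> + c2 \<le> x" by linarith
    then show ?thesis
    proof cases
      case 1 then show ?thesis using t0[of x] by (simp add: g_def)
    next
      case 2
      then have "g x \<le> 1" "t1 x = 1" using h_le1 by (auto simp: g_def t1_def)
      then show ?thesis using t0[of x] by linarith
    next
      case 3
      then have "c1 < c2" by simp
      then have "glue_K h1 h2 \<beta> \<alpha> (S x) \<le> a + s * S x" using hA S01 by blast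
      moreover have "g x = glue_K h1 h2 \<beta> \<alpha> (S x)" "t1 x = 0" "t2 x = a" "t3 x = s * S x" "t4 x = 0"
        using 3 c1 by (auto simp: g_def t1_def t2_def t3_def t4_def)
      ultimately show ?thesis by simp
    next
      case 4
      have "glue_K h1 h2 \<beta> \<alpha> (S x) \<le> k * S x" using hK S01 by blast
      moreover have "g x = glue_K h1 h2 \<beta> \<alpha> (S x)" "t1 x = 0" "t2 x = 0" "t3 x = s * S x" "t4 x = (k - s) * S x"
        using 4 c1 c12 by (auto simp: g_def t1_def t2_def t3_def t4_def)
      ultimately show ?thesis by (simp add: algebra_simps)
    qed
  qed
  have [measurable]: "t1 \<in> borel_measurable borel" unfolding t1_def[abs_def] by measurable
  have [measurable]: "t2 \<in> borel_measurable borel" unfolding t2_def[abs_def] by measurable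
  have [measurable]: "t3 \<in> borel_measurable borel" unfolding t3_def[abs_def] by measurable
  have [measurable]: "t4 \<in> borel_measurable borel" unfolding t4_def[abs_def] by measurable
  have "(\<integral>\<^sup>+x. ennreal (g x) \<partial>lborel) \<le> (\<integral>\<^sup>+x. ennreal (t1 x + t2 x + t3 x + t4 x) \<partial>lborel)"
    by (intro nn_integral_mono ennreal_leI gle)
  also have "\<dots> = (\<integral>\<^sup>+x. ennreal (t1 x) + ennreal (t2 x) + ennreal (t3 x) + ennreal (t4 x) \<partial>lborel)"
    using t0 by (intro nn_integral_cong) (simp add: add_nonneg_nonneg)
  also have "\<dots> = (\<integral>\<^sup>+x. ennreal (t1 x) \<partial>lborel) + (\<integral>\<^sup>+x. ennreal (t2 x) \<partial>lborel)
       + (\<integral>\<^sup>+x. ennreal (t3 x) \<partial>lborel) + (\<integral>\<^sup>+x. ennreal (t4 x) \<partial>lborel)"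
    by (simp add: nn_integral_add)
  finally have E1: "(\<integral>\<^sup>+x. ennreal (g x) \<partial>lborel) \<le> (\<integral>\<^sup>+x. ennreal (t1 x) \<partial>lborel) + (\<integral>\<^sup>+x. ennreal (t2 x) \<partial>lborel)
       + (\<integral>\<^sup>+x. ennreal (t3 x) \<partial>lborel) + (\<integral>\<^sup>+x. ennreal (t4 x) \<partial>lborel)" .
  have T1: "(\<integral>\<^sup>+x. ennreal (t1 x) \<partial>lborel) = ennreal c1"
    unfolding t1_def ennreal_indicator using c1 by simp
  have T2: "(\<integral>\<^sup>+x. ennreal (t2 x) \<partial>lborel) = ennreal (a * (c2 - c1))"
  proof -
    have "(\<integral>\<^sup>+x. ennreal (t2 x) \<partial>lborel) = (\<integral>\<^sup>+x. ennreal a * indicator {\<mu>+c1..<\<mu>+c2} x \<partial>lborel)"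
      unfolding t2_def using a by (simp add: ennreal_mult' ennreal_indicator)
    also have "\<dots> = ennreal a * ennreal (c2 - c1)" using c12 by (subst nn_integral_cmult_indicator) auto
    also have "\<dots> = ennreal (a * (c2 - c1))" using a by (simp add: ennreal_mult')
    finally show ?thesis .
  qed
  have T3: "(\<integral>\<^sup>+x. ennreal (t3 x) \<partial>lborel) = ennreal s * (\<integral>\<^sup>+\<omega>. ennreal (max 0 (X \<omega> - (\<mu> + c1))) \<partial>M)"
  proof -
    have "(\<integral>\<^sup>+x. ennreal (t3 x) \<partial>lborel) = (\<integral>\<^sup>+x. ennreal s * ennreal (indicator {\<mu>+c1..} x * S x) \<partial>lborel)"
      unfolding t3_def using s by (simp add: ennreal_mult')
    also have "\<dots> = ennreal s * (\<integral>\<^sup>+x. ennreal (indicator {\<mu>+c1..} x * S x) \<partial>lborel)"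
      by (rule nn_integral_cmult) measurable
    also have "(\<integral>\<^sup>+x. ennreal (indicator {\<mu>+c1..} x * S x) \<partial>lborel) = (\<integral>\<^sup>+\<omega>. ennreal (max 0 (X \<omega> - (\<mu> + c1))) \<partial>M)"
      unfolding S_def survival_def by (rule LC[OF Xm])
    finally show ?thesis .
  qed
  have T4: "(\<integral>\<^sup>+x. ennreal (t4 x) \<partial>lborel) = ennreal (k - s) * (\<integral>\<^sup>+\<omega>. ennreal (max 0 (X \<omega> - (\<mu> + c2))) \<partial>M)"
  proof -
    have "(\<integral>\<^sup>+x. ennreal (t4 x) \<partial>lborel) = (\<integral>\<^sup>+x. ennreal (k - s) * ennreal (indicator {\<mu>+c2..} x * S x) \<partial>lborel)"
      unfolding t4_def using sk by (simp add: ennreal_mult')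
    also have "\<dots> = ennreal (k - s) * (\<integral>\<^sup>+x. ennreal (indicator {\<mu>+c2..} x * S x) \<partial>lborel)"
      by (rule nn_integral_cmult) measurable
    also have "(\<integral>\<^sup>+x. ennreal (indicator {\<mu>+c2..} x * S x) \<partial>lborel) = (\<integral>\<^sup>+\<omega>. ennreal (max 0 (X \<omega> - (\<mu> + c2))) \<partial>M)"
      unfolding S_def survival_def by (rule LC[OF Xm])
    finally show ?thesis .
  qed
  have "ennreal s * (\<integral>\<^sup>+\<omega>. ennreal (max 0 (X \<omega> - (\<mu> + c1))) \<partial>M)
       + ennreal (k - s) * (\<integral>\<^sup>+\<omega>. ennreal (max 0 (X \<omega> - (\<mu> + c2))) \<partial>M)
     = (\<integral>\<^sup>+\<omega>. ennreal (s * max 0 (X \<omega> - (\<mu> + c1)) + (k - s) * max 0 (X \<omega> - (\<mu> + c2))) \<partial>M)"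
  proof -
    have "(\<integral>\<^sup>+\<omega>. ennreal (s * max 0 (X \<omega> - (\<mu> + c1)) + (k - s) * max 0 (X \<omega> - (\<mu> + c2))) \<partial>M)
       = (\<integral>\<^sup>+\<omega>. ennreal s * ennreal (max 0 (X \<omega> - (\<mu> + c1))) + ennreal (k - s) * ennreal (max 0 (X \<omega> - (\<mu> + c2))) \<partial>M)"
      using s sk by (intro nn_integral_cong) (simp add: ennreal_mult')
    also have "\<dots> = (\<integral>\<^sup>+\<omega>. ennreal s * ennreal (max 0 (X \<omega> - (\<mu> + c1))) \<partial>M) + (\<integral>\<^sup>+\<omega>. ennreal (k - s) * ennreal (max 0 (X \<omega> - (\<mu> + c2))) \<partial>M)"
    proof -
      have m1: "(\<lambda>\<omega>. ennreal s * ennreal (max 0 (X \<omega> - (\<mu> + c1)))) \<in> borel_measurable M" using Xm by measurable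
      have m2: "(\<lambda>\<omega>. ennreal (k - s) * ennreal (max 0 (X \<omega> - (\<mu> + c2)))) \<in> borel_measurable M" using Xm by measurable
      show ?thesis by (rule nn_integral_add[OF m1 m2])
    qed
    also have "\<dots> = ennreal s * (\<integral>\<^sup>+\<omega>. ennreal (max 0 (X \<omega> - (\<mu> + c1))) \<partial>M)
       + ennreal (k - s) * (\<integral>\<^sup>+\<omega>. ennreal (max 0 (X \<omega> - (\<mu> + c2))) \<partial>M)"
      using Xm by (simp add: nn_integral_cmult)
    finally show ?thesis by simp
  qed
  also have "(\<integral>\<^sup>+\<omega>. ennreal (s * max 0 (X \<omega> - (\<mu> + c1)) + (k - s) * max 0 (X \<omega> - (\<mu> + c2))) \<partial>M)
     \<le> (\<integral>\<^sup>+\<omega>. ennreal (lam * (max 0 (X \<omega> - \<mu>))\<^sup>2) \<partial>M)"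
  proof (intro nn_integral_mono ennreal_leI)
    fix \<omega>
    define z where "z = max 0 (X \<omega> - \<mu>)"
    have z0: "0 \<le> z" by (simp add: z_def)
    have e1: "max 0 (X \<omega> - (\<mu> + c1)) = max 0 (z - c1)" using c1 by (simp add: z_def max_def)
    have e2: "max 0 (X \<omega> - (\<mu> + c2)) = max 0 (z - c2)" using c1 c12 by (simp add: z_def max_def)
    show "s * max 0 (X \<omega> - (\<mu> + c1)) + (k - s) * max 0 (X \<omega> - (\<mu> + c2)) \<le> lam * (max 0 (X \<omega> - \<mu>))\<^sup>2"
      unfolding e1 e2 z_def[symmetric] using hQ z0 by blast
  qed
  also have "(\<integral>\<^sup>+\<omega>. ennreal (lam * (max 0 (X \<omega> - \<mu>))\<^sup>2) \<partial>M) = ennreal (lam * \<sigma>\<^sup>2 / 2)"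
  proof -
    have "(\<integral>\<^sup>+\<omega>. ennreal (lam * (max 0 (X \<omega> - \<mu>))\<^sup>2) \<partial>M) = ennreal (\<integral>\<omega>. lam * (max 0 (X \<omega> - \<mu>))\<^sup>2 \<partial>M)"
      using sym_facts(3)[OF XV] lam by (intro nn_integral_eq_integral) auto
    also have "(\<integral>\<omega>. lam * (max 0 (X \<omega> - \<mu>))\<^sup>2 \<partial>M) = lam * \<sigma>\<^sup>2 / 2"
      using sym_facts(4)[OF XV] by simp
    finally show ?thesis .
  qed
  finally have COMB: "ennreal s * (\<integral>\<^sup>+\<omega>. ennreal (max 0 (X \<omega> - (\<mu> + c1))) \<partial>M)
       + ennreal (k - s) * (\<integral>\<^sup>+\<omega>. ennreal (max 0 (X \<omega> - (\<mu> + c2))) \<partial>M) \<le> ennreal (lam * \<sigma>\<^sup>2 / 2)" .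
  have main: "(\<integral>\<^sup>+x. ennreal (g x) \<partial>lborel) \<le> ennreal c1 + ennreal (a * (c2 - c1)) + ennreal (lam * \<sigma>\<^sup>2 / 2)"
  proof -
    have "(\<integral>\<^sup>+x. ennreal (g x) \<partial>lborel) \<le> ennreal c1 + ennreal (a * (c2 - c1)) + (ennreal s * (\<integral>\<^sup>+\<omega>. ennreal (max 0 (X \<omega> - (\<mu> + c1))) \<partial>M)
       + ennreal (k - s) * (\<integral>\<^sup>+\<omega>. ennreal (max 0 (X \<omega> - (\<mu> + c2))) \<partial>M))"
      using E1 unfolding T1 T2 T3 T4 by (simp add: add.assoc)
    also have "\<dots> \<le> ennreal c1 + ennreal (a * (c2 - c1)) + ennreal (lam * \<sigma>\<^sup>2 / 2)"
      by (rule add_left_mono[OF COMB])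
    finally show ?thesis .
  qed
  also have "\<dots> = ennreal B" unfolding B_def using c1 c12 a lam by simp
  finally have mainB: "(\<integral>\<^sup>+x. ennreal (g x) \<partial>lborel) \<le> ennreal B" .
  have gi: "integrable lborel g"
    using mainB g0 by (intro integrableI_nonneg) (auto simp: top_unique less_top[symmetric] dest: order.strict_trans1)
  then show "integrable lborel (\<lambda>x. indicator {\<mu>..} x * glue_K h1 h2 \<beta> \<alpha> (survival M X x))"
    unfolding g_def[abs_def] S_def .
  have "ennreal (\<integral>x. g x \<partial>lborel) \<le> ennreal B"
    using mainB gi g0 by (subst nn_integral_eq_integral[symmetric]) auto
  then have "(\<integral>x. g x \<partial>lborel) \<le> B" using c1 c12 a lam unfolding B_def by (subst (asm) ennreal_le_iff) auto
  then show "(\<integral>x. indicator {\<mu>..} x * glue_K h1 h2 \<beta> \<alpha> (survival M X x) \<partial>lborel)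
          \<le> c1 + a * (c2 - c1) + lam * \<sigma>\<^sup>2 / 2" unfolding g_def S_def B_def .
qed

end

lemma quad_key:
  fixes lam u z :: real assumes "0 < lam"
  shows "u * z - u * u / (4 * lam) \<le> lam * z\<^sup>2"
proof -
  have sq: "0 \<le> (2 * lam * z - u)\<^sup>2" by simp
  have "u * z - u * u / (4 * lam) = (4 * lam * (u * z) - u * u) / (4 * lam)" using assms by (simp add: field_simps)
  also have "\<dots> \<le> (4 * lam * (lam * z\<^sup>2)) / (4 * lam)"
  proof (rule divide_right_mono)
    show "4 * lam * (u * z) - u * u \<le> 4 * lam * (lam * z\<^sup>2)"
      using sq by (simp add: power2_eq_square algebra_simps)
  qed (use assms in simp)
  also have "\<dots> = lam * z\<^sup>2" using assms by simp
  finally show ?thesis .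
qed

lemma quad:
  fixes lam s k z :: real assumes lam: "0 < lam" and s: "0 \<le> s" and sk: "s \<le> k" and z: "0 \<le> z"
  shows "s * max 0 (z - s / (4 * lam)) + (k - s) * max 0 (z - (k + s) / (4 * lam)) \<le> lam * z\<^sup>2"
proof -
  have cc: "s / (4 * lam) \<le> (k + s) / (4 * lam)" using lam sk s by (intro divide_right_mono) auto
  consider "z \<le> s / (4 * lam)" | "s / (4 * lam) < z" "z \<le> (k + s) / (4 * lam)" | "(k + s) / (4 * lam) < z"
    by linarith
  then show ?thesis
  proof cases
    case 1
    then have "max 0 (z - s / (4 * lam)) = 0" "max 0 (z - (k + s) / (4 * lam)) = 0" using cc by auto
    then show ?thesis using lam by simp
  next
    case 2
    then have "max 0 (z - s / (4 * lam)) = z - s / (4 * lam)" "max 0 (z - (k + s) / (4 * lam)) = 0" by auto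
    moreover have "s * (z - s / (4 * lam)) = s * z - s * s / (4 * lam)" by (simp add: algebra_simps)
    ultimately show ?thesis using quad_key[OF lam, of s z] by simp
  next
    case 3
    then have "max 0 (z - s / (4 * lam)) = z - s / (4 * lam)" "max 0 (z - (k + s) / (4 * lam)) = z - (k + s) / (4 * lam)"
      using cc by auto
    moreover have "s * (z - s / (4 * lam)) + (k - s) * (z - (k + s) / (4 * lam)) = k * z - k * k / (4 * lam)"
      using lam by (simp add: field_simps)
    ultimately show ?thesis using quad_key[OF lam, of k z] by simp
  qed
qed

context glue begin

lemma caseB_facts:
  assumes c1: "(h2 - h1) / (\<beta> - \<alpha>) < h1 / (1 - \<beta>)" and c2: "1 - h1 < (\<beta> - \<alpha>) / (1 - \<alpha>)"
  defines "s \<equiv> (1 - h1) / (\<beta> - \<alpha>)" and "k \<equiv> h1 / (1 - \<beta>)" and "a \<equiv> 1 - (1 - h1) / (\<beta> - \<alpha>) * (1 - \<alpha>)"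
  shows "0 \<le> a" "0 \<le> s" "s \<le> k" "\<forall>t. 0 \<le> t \<longrightarrow> t \<le> 1 \<longrightarrow> h t \<le> a + s * t"
    "\<forall>t. 0 \<le> t \<longrightarrow> t \<le> 1 \<longrightarrow> h t \<le> k * t"
    "s + a * k = (h1\<^sup>2 * (1 - \<alpha>) + (1 - 2 * h1) * (1 - \<beta>)) / ((1 - \<beta>) * (\<beta> - \<alpha>))"
proof -
  have pa: "1 - \<alpha> > 0" "\<beta> - \<alpha> > 0" "1 - \<beta> > 0" using a2 a3 by auto
  have B: "1 - \<beta> < h1 * (1 - \<alpha>)"
  proof -
    have "(1 - h1) * (1 - \<alpha>) < \<beta> - \<alpha>" using c2 pa by (simp add: field_simps)
    then show ?thesis by (simp add: algebra_simps)
  qed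
  have A: "(h2 - h1) * (1 - \<beta>) < h1 * (\<beta> - \<alpha>)" using c1 pa by (simp add: field_simps)
  have k1s: "(h2 - h1) / (\<beta> - \<alpha>) \<le> s" unfolding s_def using a6 pa by (intro divide_right_mono) auto
  have aeq: "a = h1 - s * (1 - \<beta>)" unfolding a_def s_def using pa by (simp add: field_simps)
  have hks: "h1 = k * (1 - \<beta>)" unfolding k_def using pa by simp
  show "0 \<le> s" unfolding s_def using a6 a5 pa by simp
  show sk: "s \<le> k"
  proof -
    have "(1 - h1) * (1 - \<beta>) \<le> h1 * (\<beta> - \<alpha>)" using B by (simp add: algebra_simps)
    then show ?thesis unfolding s_def k_def using pa by (simp add: field_simps)
  qed
  show "0 \<le> a"
  proof -
    have "(1 - h1) * (1 - \<alpha>) < \<beta> - \<alpha>" using B by (simp add: algebra_simps)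
    then have "(1 - h1) / (\<beta> - \<alpha>) * (1 - \<alpha>) \<le> 1" using pa by (simp add: field_simps)
    then show ?thesis unfolding a_def by simp
  qed
  have k1k: "(h2 - h1) / (\<beta> - \<alpha>) \<le> k" using k1s sk by simp
  have k1_0: "0 \<le> (h2 - h1) / (\<beta> - \<alpha>)" using a5 pa by simp
  have hpiece: "h t = h1 + (h2 - h1) / (\<beta> - \<alpha>) * (t - (1 - \<beta>))" if "1 - \<beta> \<le> t" "t < 1 - \<alpha>" for t
    using that by (simp add: glue_K_def)
  show "\<forall>t. 0 \<le> t \<longrightarrow> t \<le> 1 \<longrightarrow> h t \<le> a + s * t"
  proof (intro allI impI)
    fix t :: real assume t0: "0 \<le> t" and t1: "t \<le> 1"
    have ast: "a + s * t = h1 + s * (t - (1 - \<beta>))" using aeq by (simp add: algebra_simps)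
    consider "t < 1 - \<beta>" | "1 - \<beta> \<le> t" "t < 1 - \<alpha>" | "1 - \<alpha> \<le> t" by linarith
    then show "h t \<le> a + s * t"
    proof cases
      case 1
      then have "h t = k * t" by (simp add: glue_K_def k_def)
      moreover have "k * t \<le> h1 + s * (t - (1 - \<beta>))"
      proof -
        have "0 \<le> (k - s) * ((1 - \<beta>) - t)" using sk 1 by simp
        then show ?thesis using hks by (simp add: algebra_simps)
      qed
      ultimately show ?thesis using ast by simp
    next
      case 2
      have "(h2 - h1) / (\<beta> - \<alpha>) * (t - (1 - \<beta>)) \<le> s * (t - (1 - \<beta>))"
        using k1s 2 by (intro mult_right_mono) auto
      then show ?thesis using hpiece[OF 2] ast by simp
    next
      case 3
      then have "h t = 1" by (rule h_one)
      moreover have "a + s * t = 1 + s * (t - (1 - \<alpha>))"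
      proof -
        have "a = 1 - s * (1 - \<alpha>)" unfolding a_def s_def by simp
        then show ?thesis by (simp add: algebra_simps)
      qed
      moreover have "0 \<le> s * (t - (1 - \<alpha>))" using 3 \<open>0 \<le> s\<close> by simp
      ultimately show ?thesis by simp
    qed
  qed
  show "\<forall>t. 0 \<le> t \<longrightarrow> t \<le> 1 \<longrightarrow> h t \<le> k * t"
  proof (intro allI impI)
    fix t :: real assume t0: "0 \<le> t" and t1: "t \<le> 1"
    consider "t < 1 - \<beta>" | "1 - \<beta> \<le> t" "t < 1 - \<alpha>" | "1 - \<alpha> \<le> t" by linarith
    then show "h t \<le> k * t"
    proof cases
      case 1
      then show ?thesis by (simp add: glue_K_def k_def)
    next
      case 2
      have "(h2 - h1) / (\<beta> - \<alpha>) * (t - (1 - \<beta>)) \<le> k * (t - (1 - \<beta>))"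
        using k1k 2 by (intro mult_right_mono) auto
      then have "h t \<le> h1 + k * (t - (1 - \<beta>))" using hpiece[OF 2] by linarith
      moreover have "h1 + k * (t - (1 - \<beta>)) = k * t" using hks by (simp add: algebra_simps)
      ultimately show ?thesis by simp
    next
      case 3
      have "1 \<le> k * (1 - \<alpha>)" using B pa unfolding k_def by (simp add: field_simps)
      also have "\<dots> \<le> k * t" using 3 sk \<open>0 \<le> s\<close> by (intro mult_left_mono) auto
      finally show ?thesis using h_one[OF 3] by simp
    qed
  qed
  show "s + a * k = (h1\<^sup>2 * (1 - \<alpha>) + (1 - 2 * h1) * (1 - \<beta>)) / ((1 - \<beta>) * (\<beta> - \<alpha>))"
  proof -
    have "a * k = h1 * k - s * ((1 - \<beta>) * k)" unfolding aeq by (simp add: algebra_simps)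
    also have "(1 - \<beta>) * k = h1" using hks by simp
    finally have ak: "a * k = h1 * k - s * h1" .
    have "s + a * k = s * (1 - h1) + h1 * k" unfolding ak by (simp add: algebra_simps)
    also have "\<dots> = (1 - h1)\<^sup>2 / (\<beta> - \<alpha>) + h1\<^sup>2 / (1 - \<beta>)"
      unfolding s_def k_def by (simp add: power2_eq_square)
    also have "\<dots> = ((1 - h1)\<^sup>2 * (1 - \<beta>) + h1\<^sup>2 * (\<beta> - \<alpha>)) / ((1 - \<beta>) * (\<beta> - \<alpha>))"
      using pa by (simp add: field_simps)
    also have "(1 - h1)\<^sup>2 * (1 - \<beta>) + h1\<^sup>2 * (\<beta> - \<alpha>) = h1\<^sup>2 * (1 - \<alpha>) + (1 - 2 * h1) * (1 - \<beta>)"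
      by (simp add: power2_eq_square algebra_simps)
    finally show ?thesis .
  qed
qed

end

context prob_space begin

lemma boundA:
  assumes gl: "glue \<alpha> \<beta> h1 h2" and XV: "X \<in> VS M \<mu> \<sigma>" and sg: "\<sigma> > 0"
    and hyp: "(h2 - h1) / (\<beta> - \<alpha>) \<ge> h1 / (1 - \<beta>) \<or> 1 - h1 \<ge> (\<beta> - \<alpha>) / (1 - \<alpha>)"
  shows "distortion_rm (glue_K h1 h2 \<beta> \<alpha>) M X \<le> \<mu> + \<sigma> * sqrt (1 / (2 * (1 - \<alpha>)))"
proof -
  interpret glue \<alpha> \<beta> h1 h2 by (rule gl)
  have pa: "1 - \<alpha> > 0" using a2 a3 by auto
  define r where "r = sqrt (1 / (2 * (1 - \<alpha>)))"
  have r0: "r > 0" unfolding r_def using pa by simp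
  have r2: "r\<^sup>2 = 1 / (2 * (1 - \<alpha>))" unfolding r_def using pa by simp
  define s where "s = 1 / (1 - \<alpha>)"
  have n2: "2 - 2 * \<alpha> \<noteq> 0" using pa by simp
  have s2: "s = 2 * r\<^sup>2" unfolding s_def r2 using pa n2 by (simp add: field_simps)
  define lam where "lam = r / \<sigma>"
  have lam0: "lam > 0" unfolding lam_def using r0 sg by simp
  define c where "c = s / (4 * lam)"
  have s0: "0 \<le> s" unfolding s_def using pa by simp
  have c0: "0 \<le> c" unfolding c_def using s0 lam0 by simp
  have hK: "\<forall>t. 0 \<le> t \<longrightarrow> t \<le> 1 \<longrightarrow> glue_K h1 h2 \<beta> \<alpha> t \<le> s * t"
    using h_majA[OF hyp] by (simp add: s_def)
  have hQ: "\<forall>z\<ge>0. s * max 0 (z - c) + (s - s) * max 0 (z - c) \<le> lam * z\<^sup>2"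
    using quad[OF lam0 s0 order.refl] by (simp add: c_def)
  have up: "integrable lborel (\<lambda>x. indicator {\<mu>..} x * glue_K h1 h2 \<beta> \<alpha> (survival M X x))"
    "(\<integral>x. indicator {\<mu>..} x * glue_K h1 h2 \<beta> \<alpha> (survival M X x) \<partial>lborel) \<le> c + 0 * (c - c) + lam * \<sigma>\<^sup>2 / 2"
    using upper[OF gl XV c0 order.refl order.refl s0 order.refl less_imp_le[OF lam0] _ hK hQ] by auto
  have "c + 0 * (c - c) + lam * \<sigma>\<^sup>2 / 2 = \<sigma> * r"
    unfolding c_def lam_def s2 using r0 sg by (simp add: field_simps power2_eq_square)
  then show ?thesis using rep[OF gl XV up(1)] up(2) unfolding r_def by simp
qed

lemma boundB:
  assumes gl: "glue \<alpha> \<beta> h1 h2" and XV: "X \<in> VS M \<mu> \<sigma>" and sg: "\<sigma> > 0"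
    and c1: "(h2 - h1) / (\<beta> - \<alpha>) < h1 / (1 - \<beta>)" and c2: "1 - h1 < (\<beta> - \<alpha>) / (1 - \<alpha>)"
  shows "distortion_rm (glue_K h1 h2 \<beta> \<alpha>) M X
     \<le> \<mu> + \<sigma> * sqrt ((h1\<^sup>2 * (1 - \<alpha>) + (1 - 2 * h1) * (1 - \<beta>)) / (2 * (1 - \<beta>) * (\<beta> - \<alpha>)))"
proof -
  interpret glue \<alpha> \<beta> h1 h2 by (rule gl)
  have pa: "1 - \<alpha> > 0" "\<beta> - \<alpha> > 0" "1 - \<beta> > 0" using a2 a3 by auto
  define s where "s = (1 - h1) / (\<beta> - \<alpha>)"
  define k where "k = h1 / (1 - \<beta>)"
  define a where "a = 1 - (1 - h1) / (\<beta> - \<alpha>) * (1 - \<alpha>)"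
  note F = caseB_facts[OF c1 c2, folded s_def k_def a_def]
  define C where "C = (h1\<^sup>2 * (1 - \<alpha>) + (1 - 2 * h1) * (1 - \<beta>)) / ((1 - \<beta>) * (\<beta> - \<alpha>))"
  have sp: "s > 0" unfolding s_def using a5 a6 pa by simp
  have CC: "C = s + a * k" using F(6) by (simp add: C_def)
  have Cp: "C > 0" unfolding CC using sp F(1) F(2) F(3) by (simp add: add_pos_nonneg)
  define r where "r = sqrt (C / 2)"
  have r0: "r > 0" unfolding r_def using Cp by simp
  have r2: "C = 2 * r\<^sup>2" unfolding r_def using Cp by simp
  have rr: "r = sqrt ((h1\<^sup>2 * (1 - \<alpha>) + (1 - 2 * h1) * (1 - \<beta>)) / (2 * (1 - \<beta>) * (\<beta> - \<alpha>)))"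
  proof -
    have "C / 2 = (h1\<^sup>2 * (1 - \<alpha>) + (1 - 2 * h1) * (1 - \<beta>)) / (2 * (1 - \<beta>) * (\<beta> - \<alpha>))"
    proof -
      have "C / 2 = (h1\<^sup>2 * (1 - \<alpha>) + (1 - 2 * h1) * (1 - \<beta>)) / ((1 - \<beta>) * (\<beta> - \<alpha>) * 2)"
        unfolding C_def by (simp only: divide_divide_eq_left)
      also have "(1 - \<beta>) * (\<beta> - \<alpha>) * 2 = 2 * (1 - \<beta>) * (\<beta> - \<alpha>)" by (simp add: algebra_simps)
      finally show ?thesis .
    qed
    then show ?thesis unfolding r_def by (rule arg_cong[where f=sqrt])
  qed
  define lam where "lam = r / \<sigma>"
  have lam0: "lam > 0" unfolding lam_def using r0 sg by simp
  define c1 where "c1 = s / (4 * lam)"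
  define c2 where "c2 = (k + s) / (4 * lam)"
  have c10: "0 \<le> c1" unfolding c1_def using F(2) lam0 by simp
  have c12: "c1 \<le> c2" unfolding c1_def c2_def using lam0 F(1,2,3) by (intro divide_right_mono) auto
  have hQ: "\<forall>z\<ge>0. s * max 0 (z - c1) + (k - s) * max 0 (z - c2) \<le> lam * z\<^sup>2"
    using quad[OF lam0 F(2) F(3)] by (simp add: c1_def c2_def)
  have up: "integrable lborel (\<lambda>x. indicator {\<mu>..} x * glue_K h1 h2 \<beta> \<alpha> (survival M X x))"
    "(\<integral>x. indicator {\<mu>..} x * glue_K h1 h2 \<beta> \<alpha> (survival M X x) \<partial>lborel) \<le> c1 + a * (c2 - c1) + lam * \<sigma>\<^sup>2 / 2"
    using upper[OF gl XV c10 c12 F(1) F(2) F(3) less_imp_le[OF lam0] _ F(5) hQ] F(4) by auto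
  have "c1 + a * (c2 - c1) + lam * \<sigma>\<^sup>2 / 2 = C / (4 * lam) + lam * \<sigma>\<^sup>2 / 2"
    unfolding c1_def c2_def CC using lam0 by (simp add: field_simps)
  also have "\<dots> = \<sigma> * r"
    unfolding lam_def r2 using r0 sg by (simp add: field_simps power2_eq_square)
  finally show ?thesis using rep[OF gl XV up(1)] up(2) unfolding rr by simp
qed

end

lemma sum_filter: "sum_list (map snd (filter P xs)) = (\<Sum>z\<leftarrow>xs. if P z then snd z else (0::real))"
  by (induction xs) auto

lemma ex5:
  fixes \<mu> \<sigma> b u p q r :: real
  assumes gl: "glue \<alpha> \<beta> h1 h2" and b: "0 < b" and bu: "b < u"
    and p: "0 \<le> p" and q: "0 \<le> q" and r: "0 \<le> r" and sum1: "2 * p + 2 * q + r = 1"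
    and var: "2 * (p * b\<^sup>2 + q * u\<^sup>2) = \<sigma>\<^sup>2"
  defines "xs \<equiv> [(\<mu> - u, q), (\<mu> - b, p), (\<mu>, r), (\<mu> + b, p), (\<mu> + u, q)]"
  defines "M \<equiv> measure_pmf (pmf_of_list xs)"
  shows "prob_space M" "(\<lambda>x. x) \<in> VS M \<mu> \<sigma>"
    "measure M {\<omega> \<in> space M. \<omega> = \<mu> - u} = q"
    "measure M {\<omega> \<in> space M. \<omega> = \<mu> - b} = p"
    "measure M {\<omega> \<in> space M. \<omega> = \<mu>} = r"
    "measure M {\<omega> \<in> space M. \<omega> = \<mu> + b} = p"
    "measure M {\<omega> \<in> space M. \<omega> = \<mu> + u} = q"
    "distortion_rm (glue_K h1 h2 \<beta> \<alpha>) M (\<lambda>x. x)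
       = \<mu> + b * glue_K h1 h2 \<beta> \<alpha> (p + q) + (u - b) * glue_K h1 h2 \<beta> \<alpha> q"
proof -
  interpret glue \<alpha> \<beta> h1 h2 by (rule gl)
  have wf: "pmf_of_list_wf xs" unfolding xs_def using p q r sum1
    by (intro pmf_of_list_wfI) auto
  show ps: "prob_space M" unfolding M_def by (rule prob_space_measure_pmf)
  interpret prob_space M by (rule ps)
  have d: "\<mu> - u \<noteq> \<mu> - b" "\<mu> - u \<noteq> \<mu>" "\<mu> - u \<noteq> \<mu> + b" "\<mu> - u \<noteq> \<mu> + u"
    "\<mu> - b \<noteq> \<mu>" "\<mu> - b \<noteq> \<mu> + b" "\<mu> - b \<noteq> \<mu> + u" "\<mu> \<noteq> \<mu> + b" "\<mu> \<noteq> \<mu> + u" "\<mu> + b \<noteq> \<mu> + u"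
    using b bu by linarith+
  have sp: "space M = UNIV" unfolding M_def by simp
  have meas: "measure M A = sum_list (map snd (filter (\<lambda>x. fst x \<in> A) xs))" for A
    unfolding M_def by (rule measure_pmf_of_list[OF wf])
  show "measure M {\<omega> \<in> space M. \<omega> = \<mu> - u} = q" "measure M {\<omega> \<in> space M. \<omega> = \<mu> - b} = p"
    "measure M {\<omega> \<in> space M. \<omega> = \<mu>} = r" "measure M {\<omega> \<in> space M. \<omega> = \<mu> + b} = p"
    "measure M {\<omega> \<in> space M. \<omega> = \<mu> + u} = q"
    unfolding meas sp xs_def using d d[THEN not_sym] by simp_all
  have fin: "finite (set_pmf (pmf_of_list xs))" by (rule finite_set_pmf_of_list[OF wf])
  have intg: "integrable M f" for f :: "real \<Rightarrow> real" unfolding M_def using fin by (rule integrable_measure_pmf_finite)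
  define A where "A = {\<mu> - u, \<mu> - b, \<mu>, \<mu> + b, \<mu> + u}"
  have pmfv: "pmf (pmf_of_list xs) (\<mu> - u) = q" "pmf (pmf_of_list xs) (\<mu> - b) = p" "pmf (pmf_of_list xs) \<mu> = r"
     "pmf (pmf_of_list xs) (\<mu> + b) = p" "pmf (pmf_of_list xs) (\<mu> + u) = q"
    unfolding pmf_pmf_of_list[OF wf] unfolding xs_def using d d[THEN not_sym] by simp_all
  have integ: "(\<integral>x. f x \<partial>M) = f (\<mu> - u) * q + f (\<mu> - b) * p + f \<mu> * r + f (\<mu> + b) * p + f (\<mu> + u) * q"
    for f :: "real \<Rightarrow> real"
  proof -
    have "(\<integral>x. f x \<partial>M) = (\<Sum>a\<in>A. f a * pmf (pmf_of_list xs) a)"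
      unfolding M_def
    proof (rule integral_measure_pmf_real)
      show "finite A" by (simp add: A_def)
      fix a assume "a \<in> set_pmf (pmf_of_list xs)"
      then have "a \<in> set (map fst xs)" using set_pmf_of_list[OF wf] by blast
      then show "a \<in> A" by (auto simp: xs_def A_def)
    qed
    also have "\<dots> = f (\<mu> - u) * q + f (\<mu> - b) * p + f \<mu> * r + f (\<mu> + b) * p + f (\<mu> + u) * q"
      unfolding A_def using d by (simp add: pmfv add.assoc)
    finally show ?thesis .
  qed
  have EX: "(\<integral>x. x \<partial>M) = \<mu>"
  proof -
    have "(\<mu> - u) * q + (\<mu> - b) * p + \<mu> * r + (\<mu> + b) * p + (\<mu> + u) * q = \<mu> * (2 * p + 2 * q + r)"
      by (simp add: algebra_simps)
    then show ?thesis using integ[of "\<lambda>x. x"] sum1 by simp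
  qed
  have VX: "(\<integral>x. (x - \<mu>)\<^sup>2 \<partial>M) = \<sigma>\<^sup>2"
  proof -
    have "(\<mu> - u - \<mu>)\<^sup>2 * q + (\<mu> - b - \<mu>)\<^sup>2 * p + (\<mu> - \<mu>)\<^sup>2 * r + (\<mu> + b - \<mu>)\<^sup>2 * p + (\<mu> + u - \<mu>)\<^sup>2 * q
        = 2 * (p * b\<^sup>2 + q * u\<^sup>2)" by (simp add: power2_eq_square algebra_simps)
    then show ?thesis using integ[of "\<lambda>x. (x - \<mu>)\<^sup>2"] var by simp
  qed
  have c1: "(\<mu> - u \<le> x) = (2 * \<mu> - x \<le> \<mu> + u)" "(\<mu> - b \<le> x) = (2 * \<mu> - x \<le> \<mu> + b)"
     "(\<mu> \<le> x) = (2 * \<mu> - x \<le> \<mu>)" "(\<mu> + b \<le> x) = (2 * \<mu> - x \<le> \<mu> - b)"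
     "(\<mu> + u \<le> x) = (2 * \<mu> - x \<le> \<mu> - u)" for x by linarith+
  have sym: "symmetric_rv M (\<lambda>x. x)"
    unfolding symmetric_rv_def
  proof (intro exI[of _ \<mu>] allI)
    fix x
    show "measure M {\<omega> \<in> space M. \<omega> \<le> x} = measure M {\<omega> \<in> space M. 2 * \<mu> - x \<le> \<omega>}"
    proof -
      have L: "measure M {\<omega> \<in> space M. \<omega> \<le> x} = (if \<mu> - u \<le> x then q else 0) + ((if \<mu> - b \<le> x then p else 0)
          + ((if \<mu> \<le> x then r else 0) + ((if \<mu> + b \<le> x then p else 0) + ((if \<mu> + u \<le> x then q else 0) + 0))))"
        unfolding meas sp sum_filter unfolding xs_def by (simp cong: if_cong split del: if_split)
      have R: "measure M {\<omega> \<in> space M. 2 * \<mu> - x \<le> \<omega>} = (if 2 * \<mu> - x \<le> \<mu> - u then q else 0) + ((if 2 * \<mu> - x \<le> \<mu> - b then p else 0)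
          + ((if 2 * \<mu> - x \<le> \<mu> then r else 0) + ((if 2 * \<mu> - x \<le> \<mu> + b then p else 0) + ((if 2 * \<mu> - x \<le> \<mu> + u then q else 0) + 0))))"
        unfolding meas sp sum_filter unfolding xs_def by (simp cong: if_cong split del: if_split)
      have e: "(if \<mu> - u \<le> x then q else 0) = (if 2 * \<mu> - x \<le> \<mu> + u then q else 0)"
        "(if \<mu> - b \<le> x then p else 0) = (if 2 * \<mu> - x \<le> \<mu> + b then p else 0)"
        "(if \<mu> \<le> x then r else 0) = (if 2 * \<mu> - x \<le> \<mu> then r else 0)"
        "(if \<mu> + b \<le> x then p else 0) = (if 2 * \<mu> - x \<le> \<mu> - b then p else 0)"
        "(if \<mu> + u \<le> x then q else 0) = (if 2 * \<mu> - x \<le> \<mu> - u then q else 0)"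
        by (intro if_cong; linarith)+
      show ?thesis unfolding L R using e by linarith
    qed
  qed
  show "(\<lambda>x. x) \<in> VS M \<mu> \<sigma>" unfolding VS_def using EX VX sym intg
    by (simp add: M_def)
  have surv: "survival M (\<lambda>x. x) x = (if x < \<mu> + b then p else 0) + (if x < \<mu> + u then q else 0)"
    if "\<mu> \<le> x" for x
  proof -
    have n: "\<not> x < \<mu> - u" "\<not> x < \<mu> - b" "\<not> x < \<mu>" using that b bu by linarith+
    show ?thesis unfolding survival_def meas sp sum_filter unfolding xs_def using n by (simp cong: if_cong split del: if_split)
  qed
  define H where "H = glue_K h1 h2 \<beta> \<alpha>"
  have pt: "indicator {\<mu>..} x * H (survival M (\<lambda>x. x) x)
     = H (p + q) * indicator {\<mu>..<\<mu>+b} x + H q * indicator {\<mu>+b..<\<mu>+u} x" for x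
  proof -
    consider "x < \<mu>" | "\<mu> \<le> x" "x < \<mu> + b" | "\<mu> + b \<le> x" "x < \<mu> + u" | "\<mu> + u \<le> x" by linarith
    then show ?thesis
    proof cases
      case 1 then show ?thesis using b by (simp add: indicator_def)
    next
      case 2 then show ?thesis using surv[of x] bu by (simp add: indicator_def)
    next
      case 3 then show ?thesis using surv[of x] b by (simp add: indicator_def)
    next
      case 4 then show ?thesis using surv[of x] b bu h_zero by (simp add: indicator_def H_def)
    qed
  qed
  have ii: "integrable lborel (\<lambda>x. H (p + q) * indicator {\<mu>..<\<mu>+b} x + H q * indicator {\<mu>+b..<\<mu>+u} x :: real)"
    by (intro Bochner_Integration.integrable_add integrable_mult_right integrable_real_indicator) (auto simp: finIco)
  have gi: "integrable lborel (\<lambda>x. indicator {\<mu>..} x * H (survival M (\<lambda>x. x) x))"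
    unfolding pt using ii .
  have "distortion_rm H M (\<lambda>x. x) = \<mu> + (\<integral>x. indicator {\<mu>..} x * H (survival M (\<lambda>x. x) x) \<partial>lborel)"
    unfolding H_def by (rule rep[OF gl \<open>(\<lambda>x. x) \<in> VS M \<mu> \<sigma>\<close> gi[unfolded H_def]])
  also have "(\<integral>x. indicator {\<mu>..} x * H (survival M (\<lambda>x. x) x) \<partial>lborel) = H (p + q) * b + H q * (u - b)"
    unfolding pt using b bu
    by (subst Bochner_Integration.integral_add) (auto intro!: integrable_mult_right integrable_real_indicator simp: finIco)
  finally show "distortion_rm (glue_K h1 h2 \<beta> \<alpha>) M (\<lambda>x. x)
       = \<mu> + b * glue_K h1 h2 \<beta> \<alpha> (p + q) + (u - b) * glue_K h1 h2 \<beta> \<alpha> q"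
    unfolding H_def by (simp add: algebra_simps)
qed


theorem proposition3p2:
  fixes \<mu> \<sigma> \<alpha> \<beta> h1 h2 :: real
  assumes "\<sigma> > 0" and "1/2 \<le> \<alpha>" and "\<alpha> < \<beta>" and "\<beta> < 1"
    and "0 \<le> h1" and "h1 \<le> h2" and "h2 < 1"
  defines "k1 \<equiv> (h2 - h1) / (\<beta> - \<alpha>)" and "k2 \<equiv> h1 / (1 - \<beta>)"
    and "\<zeta> \<equiv> h1\<^sup>2 * (1 - \<alpha>) + (1 - 2 * h1) * (1 - \<beta>)"
  shows
    "((k1 \<ge> k2 \<or> (k1 < k2 \<and> 1 - h1 \<ge> (\<beta> - \<alpha>) / (1 - \<alpha>))) \<longrightarrow>
       (\<forall>(M::'a measure) X. prob_space M \<longrightarrow> X \<in> VS M \<mu> \<sigma> \<longrightarrow>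
          distortion_rm (glue_K h1 h2 \<beta> \<alpha>) M X \<le> \<mu> + \<sigma> * sqrt (1 / (2 * (1 - \<alpha>))))
     \<and> (\<exists>(M::real measure) X. prob_space M \<and> X \<in> VS M \<mu> \<sigma>
          \<and> measure M {\<omega> \<in> space M. X \<omega> = \<mu> - \<sigma> / sqrt (2 * (1 - \<alpha>))} = 1 - \<alpha>
          \<and> measure M {\<omega> \<in> space M. X \<omega> = \<mu> + \<sigma> / sqrt (2 * (1 - \<alpha>))} = 1 - \<alpha>
          \<and> measure M {\<omega> \<in> space M. X \<omega> = \<mu>} = 2 * \<alpha> - 1
          \<and> distortion_rm (glue_K h1 h2 \<beta> \<alpha>) M X = \<mu> + \<sigma> * sqrt (1 / (2 * (1 - \<alpha>)))))
   \<and> ((k1 < k2 \<and> 1 - h1 < (\<beta> - \<alpha>) / (1 - \<alpha>)) \<longrightarrow>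
       (\<forall>(M::'a measure) X. prob_space M \<longrightarrow> X \<in> VS M \<mu> \<sigma> \<longrightarrow>
          distortion_rm (glue_K h1 h2 \<beta> \<alpha>) M X
            \<le> \<mu> + \<sigma> * sqrt (\<zeta> / (2 * (1 - \<beta>) * (\<beta> - \<alpha>))))
     \<and> (\<exists>(M::real measure) X. prob_space M \<and> X \<in> VS M \<mu> \<sigma>
          \<and> measure M {\<omega> \<in> space M. X \<omega> = \<mu> - \<sigma> * h1 * sqrt ((\<beta> - \<alpha>) / (2 * (1 - \<beta>) * \<zeta>))} = 1 - \<beta>
          \<and> measure M {\<omega> \<in> space M. X \<omega> = \<mu> + \<sigma> * h1 * sqrt ((\<beta> - \<alpha>) / (2 * (1 - \<beta>) * \<zeta>))} = 1 - \<beta>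
          \<and> measure M {\<omega> \<in> space M. X \<omega> = \<mu> - \<sigma> * (1 - h1) * sqrt ((1 - \<beta>) / (2 * (\<beta> - \<alpha>) * \<zeta>))} = \<beta> - \<alpha>
          \<and> measure M {\<omega> \<in> space M. X \<omega> = \<mu> + \<sigma> * (1 - h1) * sqrt ((1 - \<beta>) / (2 * (\<beta> - \<alpha>) * \<zeta>))} = \<beta> - \<alpha>
          \<and> measure M {\<omega> \<in> space M. X \<omega> = \<mu>} = 2 * \<alpha> - 1
          \<and> distortion_rm (glue_K h1 h2 \<beta> \<alpha>) M X
              = \<mu> + \<sigma> * sqrt (\<zeta> / (2 * (1 - \<beta>) * (\<beta> - \<alpha>)))))"
proof -
  have gl: "glue \<alpha> \<beta> h1 h2" unfolding glue_def using assms by auto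
  interpret glue \<alpha> \<beta> h1 h2 by (rule gl)
  have pa: "1 - \<alpha> > 0" "\<beta> - \<alpha> > 0" "1 - \<beta> > 0" using assms by auto
  have sg: "\<sigma> > 0" by fact
  have r0: "0 \<le> 2 * \<alpha> - 1" using assms by simp
  show ?thesis
  proof (intro conjI impI)
    assume hA: "k2 \<le> k1 \<or> (k1 < k2 \<and> (\<beta> - \<alpha>) / (1 - \<alpha>) \<le> 1 - h1)"
    have hyp: "(h2 - h1) / (\<beta> - \<alpha>) \<ge> h1 / (1 - \<beta>) \<or> 1 - h1 \<ge> (\<beta> - \<alpha>) / (1 - \<alpha>)"
      using hA unfolding k1_def k2_def by auto
    show "\<forall>(M::'a measure) X. prob_space M \<longrightarrow> X \<in> VS M \<mu> \<sigma> \<longrightarrow>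
          distortion_rm (glue_K h1 h2 \<beta> \<alpha>) M X \<le> \<mu> + \<sigma> * sqrt (1 / (2 * (1 - \<alpha>)))"
      using prob_space.boundA[OF _ gl _ sg hyp] by blast
    define b where "b = \<sigma> / sqrt (2 * (1 - \<alpha>))"
    have b0: "0 < b" unfolding b_def using sg pa by simp
    have bb: "b < 2 * b" using b0 by simp
    have sum1: "2 * (1 - \<alpha>) + 2 * 0 + (2 * \<alpha> - 1) = (1::real)" by simp
    have var: "2 * ((1 - \<alpha>) * b\<^sup>2 + 0 * (2 * b)\<^sup>2) = \<sigma>\<^sup>2"
    proof -
      have "b\<^sup>2 = \<sigma>\<^sup>2 / (2 * (1 - \<alpha>))" unfolding b_def using pa by (simp add: power_divide)
      moreover have "2 - 2 * \<alpha> \<noteq> 0" using pa by simp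
      ultimately show ?thesis using pa by (simp add: field_simps)
    qed
    note E = ex5[OF gl b0 bb less_imp_le[OF pa(1)] order.refl r0 sum1 var, of \<mu>]
    have rho: "\<mu> + b * glue_K h1 h2 \<beta> \<alpha> (1 - \<alpha> + 0) + (2 * b - b) * glue_K h1 h2 \<beta> \<alpha> 0
       = \<mu> + \<sigma> * sqrt (1 / (2 * (1 - \<alpha>)))"
      using h_one[of "1 - \<alpha> + 0"] h_zero unfolding b_def by (simp add: real_sqrt_divide)
    show "\<exists>(M::real measure) X. prob_space M \<and> X \<in> VS M \<mu> \<sigma>
          \<and> measure M {\<omega> \<in> space M. X \<omega> = \<mu> - \<sigma> / sqrt (2 * (1 - \<alpha>))} = 1 - \<alpha>
          \<and> measure M {\<omega> \<in> space M. X \<omega> = \<mu> + \<sigma> / sqrt (2 * (1 - \<alpha>))} = 1 - \<alpha>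
          \<and> measure M {\<omega> \<in> space M. X \<omega> = \<mu>} = 2 * \<alpha> - 1
          \<and> distortion_rm (glue_K h1 h2 \<beta> \<alpha>) M X = \<mu> + \<sigma> * sqrt (1 / (2 * (1 - \<alpha>)))"
      using E(1) E(2) E(4) E(5) E(6) trans[OF E(8) rho] unfolding b_def by blast
  next
    assume hB: "k1 < k2 \<and> 1 - h1 < (\<beta> - \<alpha>) / (1 - \<alpha>)"
    have c1: "(h2 - h1) / (\<beta> - \<alpha>) < h1 / (1 - \<beta>)" using hB unfolding k1_def k2_def by auto
    have c2: "1 - h1 < (\<beta> - \<alpha>) / (1 - \<alpha>)" using hB by auto
    show "\<forall>(M::'a measure) X. prob_space M \<longrightarrow> X \<in> VS M \<mu> \<sigma> \<longrightarrow>
          distortion_rm (glue_K h1 h2 \<beta> \<alpha>) M X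
            \<le> \<mu> + \<sigma> * sqrt (\<zeta> / (2 * (1 - \<beta>) * (\<beta> - \<alpha>)))"
      using prob_space.boundB[OF _ gl _ sg c1 c2] unfolding \<zeta>_def by blast
    have B: "1 - \<beta> < h1 * (1 - \<alpha>)"
    proof -
      have "(1 - h1) * (1 - \<alpha>) < \<beta> - \<alpha>" using c2 pa by (simp add: field_simps)
      then show ?thesis by (simp add: algebra_simps)
    qed
    have h1l: "h1 < 1" using assms by simp
    have zeq: "\<zeta> = (1 - h1)\<^sup>2 * (1 - \<beta>) + h1\<^sup>2 * (\<beta> - \<alpha>)"
      unfolding \<zeta>_def by (simp add: power2_eq_square algebra_simps)
    have zp: "\<zeta> > 0"
    proof -
      have "0 < (1 - h1)\<^sup>2 * (1 - \<beta>)" using h1l pa by simp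
      moreover have "0 \<le> h1\<^sup>2 * (\<beta> - \<alpha>)" using pa by simp
      ultimately show ?thesis unfolding zeq by linarith
    qed
    define D where "D = 2 * (1 - \<beta>) * (\<beta> - \<alpha>) * \<zeta>"
    have Dp: "D > 0" unfolding D_def using pa zp by simp
    have sq: "sqrt (x / c) = x / sqrt (x * c)" if "0 < x" "0 < c" for x c :: real
    proof -
      have "x / sqrt (x * c) = (sqrt x * sqrt x) / (sqrt x * sqrt c)"
        using that by (simp add: real_sqrt_mult)
      also have "\<dots> = sqrt x / sqrt c"
        by (rule nonzero_mult_divide_mult_cancel_left) (use that in simp)
      finally show ?thesis by (simp add: real_sqrt_divide)
    qed
    define Q where "Q = \<sigma> / sqrt D"
    have Qp: "Q > 0" unfolding Q_def using sg Dp by simp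
    have s1: "sqrt ((1 - \<beta>) / (2 * (\<beta> - \<alpha>) * \<zeta>)) = (1 - \<beta>) / sqrt D"
    proof -
      have "(1 - \<beta>) * (2 * (\<beta> - \<alpha>) * \<zeta>) = D" unfolding D_def by (simp add: algebra_simps)
      then show ?thesis using sq[of "1 - \<beta>" "2 * (\<beta> - \<alpha>) * \<zeta>"] pa zp by simp
    qed
    have s2: "sqrt ((\<beta> - \<alpha>) / (2 * (1 - \<beta>) * \<zeta>)) = (\<beta> - \<alpha>) / sqrt D"
    proof -
      have "(\<beta> - \<alpha>) * (2 * (1 - \<beta>) * \<zeta>) = D" unfolding D_def by (simp add: algebra_simps)
      then show ?thesis using sq[of "\<beta> - \<alpha>" "2 * (1 - \<beta>) * \<zeta>"] pa zp by simp
    qed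
    have s3: "sqrt (\<zeta> / (2 * (1 - \<beta>) * (\<beta> - \<alpha>))) = \<zeta> / sqrt D"
    proof -
      have "\<zeta> * (2 * (1 - \<beta>) * (\<beta> - \<alpha>)) = D" unfolding D_def by (simp add: algebra_simps)
      then show ?thesis using sq[of "\<zeta>" "2 * (1 - \<beta>) * (\<beta> - \<alpha>)"] pa zp by simp
    qed
    define b where "b = \<sigma> * (1 - h1) * sqrt ((1 - \<beta>) / (2 * (\<beta> - \<alpha>) * \<zeta>))"
    define u where "u = \<sigma> * h1 * sqrt ((\<beta> - \<alpha>) / (2 * (1 - \<beta>) * \<zeta>))"
    have bQ: "b = Q * ((1 - h1) * (1 - \<beta>))" unfolding b_def s1 Q_def by simp
    have uQ: "u = Q * (h1 * (\<beta> - \<alpha>))" unfolding u_def s2 Q_def by simp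
    have b0: "0 < b" unfolding bQ using Qp h1l pa by simp
    have bu: "b < u"
    proof -
      have "(1 - h1) * (1 - \<beta>) < h1 * (\<beta> - \<alpha>)" using B by (simp add: algebra_simps)
      then show ?thesis unfolding bQ uQ using Qp by simp
    qed
    have sum1: "2 * (\<beta> - \<alpha>) + 2 * (1 - \<beta>) + (2 * \<alpha> - 1) = (1::real)" by simp
    have var: "2 * ((\<beta> - \<alpha>) * b\<^sup>2 + (1 - \<beta>) * u\<^sup>2) = \<sigma>\<^sup>2"
    proof -
      have "2 * ((\<beta> - \<alpha>) * b\<^sup>2 + (1 - \<beta>) * u\<^sup>2) = Q\<^sup>2 * (2 * (1 - \<beta>) * (\<beta> - \<alpha>) * \<zeta>)"
        unfolding bQ uQ zeq by (simp add: power2_eq_square algebra_simps)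
      also have "\<dots> = Q\<^sup>2 * D" by (simp add: D_def)
      also have "\<dots> = \<sigma>\<^sup>2" unfolding Q_def using Dp by (simp add: power_divide)
      finally show ?thesis .
    qed
    note E = ex5[OF gl b0 bu less_imp_le[OF pa(2)] less_imp_le[OF pa(3)] r0 sum1 var, of \<mu>]
    have hb: "glue_K h1 h2 \<beta> \<alpha> (1 - \<beta>) = h1" using pa by (simp add: glue_K_def)
    have rho: "\<mu> + b * glue_K h1 h2 \<beta> \<alpha> (\<beta> - \<alpha> + (1 - \<beta>)) + (u - b) * glue_K h1 h2 \<beta> \<alpha> (1 - \<beta>)
       = \<mu> + \<sigma> * sqrt (\<zeta> / (2 * (1 - \<beta>) * (\<beta> - \<alpha>)))"
    proof -
      have "glue_K h1 h2 \<beta> \<alpha> (\<beta> - \<alpha> + (1 - \<beta>)) = 1" by (rule h_one) simp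
      moreover have "b + (u - b) * h1 = Q * \<zeta>"
        unfolding bQ uQ zeq by (simp add: power2_eq_square algebra_simps)
      moreover have "\<sigma> * sqrt (\<zeta> / (2 * (1 - \<beta>) * (\<beta> - \<alpha>))) = Q * \<zeta>"
        unfolding s3 Q_def by simp
      ultimately show ?thesis using hb by simp
    qed
    show "\<exists>(M::real measure) X. prob_space M \<and> X \<in> VS M \<mu> \<sigma>
          \<and> measure M {\<omega> \<in> space M. X \<omega> = \<mu> - \<sigma> * h1 * sqrt ((\<beta> - \<alpha>) / (2 * (1 - \<beta>) * \<zeta>))} = 1 - \<beta>
          \<and> measure M {\<omega> \<in> space M. X \<omega> = \<mu> + \<sigma> * h1 * sqrt ((\<beta> - \<alpha>) / (2 * (1 - \<beta>) * \<zeta>))} = 1 - \<beta>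
          \<and> measure M {\<omega> \<in> space M. X \<omega> = \<mu> - \<sigma> * (1 - h1) * sqrt ((1 - \<beta>) / (2 * (\<beta> - \<alpha>) * \<zeta>))} = \<beta> - \<alpha>
          \<and> measure M {\<omega> \<in> space M. X \<omega> = \<mu> + \<sigma> * (1 - h1) * sqrt ((1 - \<beta>) / (2 * (\<beta> - \<alpha>) * \<zeta>))} = \<beta> - \<alpha>
          \<and> measure M {\<omega> \<in> space M. X \<omega> = \<mu>} = 2 * \<alpha> - 1
          \<and> distortion_rm (glue_K h1 h2 \<beta> \<alpha>) M X
              = \<mu> + \<sigma> * sqrt (\<zeta> / (2 * (1 - \<beta>) * (\<beta> - \<alpha>)))"
      using E(1) E(2) E(3) E(4) E(5) E(6) E(7) trans[OF E(8) rho] unfolding b_def u_def by blast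
  qed
qed

end
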